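(* Let $1<d\le n$ be integers, let $C$ be a real symmetric $n\times n$ matrix with unit diagonal, and let $T_{n,d}=\{Y\in\mathbb{R}^{n\times d}: \|Y_i\|_2=1 \text{ for every row } Y_i\}$. For $Y\in T_{n,d}$ set $\psi=YY^T-C$ and $F_Y=2\psi Y$. Suppose $Y\in T_{n,d}$ satisfies $F_Y-\operatorname{diag}(F_YY^T)\,Y=0$, define the diagonal matrix $\lambda=\tfrac12\operatorname{diag}(F_YY^T)$ and $C(\lambda)=C+\lambda$. If $YY^T$ has the $d$ largest (in absolute value) eigenvalues of $C(\lambda)$, i.e. $YY^T$ equals a matrix obtained from an eigenvalue decomposition $C(\lambda)=QDQ^T$ ($Q$ orthogonal, $D$ diagonal) by keeping only $d$ eigenvalues of largest absolute value and replacing the others by $0$, then $YY^T$ is a global minimizer of the problem \[ \text{minimize } \tfrac12\sum_{i<j}(C_{ij}-X_{ij})^2 \ \text{ over symmetric } X\in\mathbb{R}^{n\times n} \text{ with } \operatorname{rank}(X)\le d,\ X_{ii}=1\ (i=1,\dots,n),\ X\succeq 0. \]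
   Context: For a square matrix $A$, $\operatorname{diag}(A)$ denotes the diagonal matrix with $\operatorname{diag}(A)_{ij}=\delta_{ij}A_{ij}$. $X\succeq 0$ means positive semidefinite. The condition $F_Y-\operatorname{diag}(F_YY^T)Y=0$ says that $Y$ is a stationary point on $T_{n,d}$ of $F(Y)=\tfrac12\|YY^T-C\|_F^2$. *)

theory Defs
  imports "HOL-Analysis.Analysis"
begin

definition diag_part :: "real^'n^'n \<Rightarrow> real^'n^'n" where
  "diag_part A = (\<chi> i j. if i = j then A $ i $ j else 0)"

definition psd :: "real^'n^'n \<Rightarrow> bool" where
  "psd X \<longleftrightarrow> (\<forall>x. 0 \<le> x \<bullet> (X *v x))"

definition in_T :: "real^'d^'n \<Rightarrow> bool" where
  "in_T Y \<longleftrightarrow> (\<forall>i. norm (Y $ i) = 1)"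

definition objective :: "real^('n::{finite,linorder})^('n::{finite,linorder}) \<Rightarrow> real^('n::{finite,linorder})^('n::{finite,linorder}) \<Rightarrow> real" where
  "objective C X = (1/2) * (\<Sum>(i,j)\<in>{(i,j). i < j}. (C $ i $ j - X $ i $ j)^2)"

definition feasible :: "nat \<Rightarrow> real^'n^'n \<Rightarrow> bool" where
  "feasible d X \<longleftrightarrow> transpose X = X \<and> rank X \<le> d \<and> (\<forall>i. X $ i $ i = 1) \<and> psd X"

end

theory Submission
  imports Defs
begin

lemma orth_expand:
  fixes B :: "'a::real_inner set"
  assumes fin: "finite B" and orth: "pairwise orthogonal B" and unit: "\<And>b. b\<in>B \<Longrightarrow> norm b = 1"
  shows "(norm (r - (\<Sum>b\<in>B. c b *\<^sub>R b)))^2 = (norm r)^2 - (\<Sum>b\<in>B. (r \<bullet> b)^2) + (\<Sum>b\<in>B. (c b - r \<bullet> b)^2)"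
proof -
  define s where "s = (\<Sum>b\<in>B. c b *\<^sub>R b)"
  have bb: "b' \<bullet> b = (if b' = b then 1 else 0)" if "b\<in>B" "b'\<in>B" for b b'
  proof (cases "b' = b")
    case True
    then show ?thesis using unit[OF that(1)] by (simp add: power2_norm_eq_inner[symmetric])
  next
    case False
    then show ?thesis using orth that by (auto simp: pairwise_def orthogonal_def)
  qed
  have sb: "s \<bullet> b = c b" if "b \<in> B" for b
  proof -
    have "s \<bullet> b = (\<Sum>b'\<in>B. c b' * (b' \<bullet> b))" by (simp add: s_def inner_sum_left)
    also have "\<dots> = (\<Sum>b'\<in>B. if b' = b then c b' else 0)"
      by (rule sum.cong) (auto simp: bb that)
    also have "\<dots> = c b" using fin that by simp
    finally show ?thesis .
  qed
  have ss: "s \<bullet> s = (\<Sum>b\<in>B. (c b)^2)"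
  proof -
    have "s \<bullet> s = (\<Sum>b\<in>B. c b * (s \<bullet> b))" by (subst (2) s_def) (simp add: inner_sum_right)
    also have "\<dots> = (\<Sum>b\<in>B. (c b)^2)" by (rule sum.cong) (auto simp: sb power2_eq_square)
    finally show ?thesis .
  qed
  have rs: "r \<bullet> s = (\<Sum>b\<in>B. c b * (r \<bullet> b))" by (simp add: s_def inner_sum_right)
  have "(norm (r - s))^2 = r \<bullet> r - 2 * (r \<bullet> s) + s \<bullet> s"
    by (simp add: power2_norm_eq_inner inner_diff inner_commute)
  also have "\<dots> = (norm r)^2 - (\<Sum>b\<in>B. (r \<bullet> b)^2) + (\<Sum>b\<in>B. (c b - r \<bullet> b)^2)"
    by (simp add: rs ss power2_norm_eq_inner power2_diff sum.distrib sum_subtractf sum_distrib_left algebra_simps)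
  finally show ?thesis by (simp add: s_def)
qed

lemma bessel:
  fixes B :: "'a::real_inner set"
  assumes fin: "finite B" and orth: "pairwise orthogonal B" and unit: "\<And>b. b\<in>B \<Longrightarrow> norm b = 1"
  shows "(\<Sum>b\<in>B. (r \<bullet> b)^2) \<le> (norm r)^2"
proof -
  have "(norm (r - (\<Sum>b\<in>B. (r \<bullet> b) *\<^sub>R b)))^2 = (norm r)^2 - (\<Sum>b\<in>B. (r \<bullet> b)^2)"
    using orth_expand[OF assms, of r "\<lambda>b. r \<bullet> b"] by simp
  moreover have "0 \<le> (norm (r - (\<Sum>b\<in>B. (r \<bullet> b) *\<^sub>R b)))^2" by simp
  ultimately show ?thesis by linarith
qed

lemma proj_bound:
  fixes B :: "'a::real_inner set"
  assumes fin: "finite B" and orth: "pairwise orthogonal B" and unit: "\<And>b. b\<in>B \<Longrightarrow> norm b = 1"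
    and x: "x \<in> span B"
  shows "(norm r)^2 - (\<Sum>b\<in>B. (r \<bullet> b)^2) \<le> (norm (r - x))^2"
proof -
  obtain u where "x = (\<Sum>b\<in>B. u b *\<^sub>R b)" using x span_finite[OF fin] by blast
  then show ?thesis using orth_expand[OF assms(1-3), of r u]
    by (simp add: sum_nonneg)
qed


definition fro :: "real^'n^'m \<Rightarrow> real" where
  "fro M = (\<Sum>i\<in>UNIV. (norm (M$i))^2)"

lemma norm_sq_vec: "(norm (v::real^'n))^2 = (\<Sum>i\<in>UNIV. (v$i)^2)"
  unfolding power2_norm_eq_inner inner_vec_def by (simp add: power2_eq_square)

lemma fro_trace: "fro (M::real^'n^'n) = trace (M ** transpose M)"
  unfolding fro_def trace_def norm_sq_vec
  by (rule sum.cong) (auto simp: matrix_matrix_mult_def transpose_def power2_eq_square)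

lemma orth_norm:
  assumes "orthogonal_matrix (Q::real^'n^'n)"
  shows "norm (Q *v x) = norm x"
proof -
  have "(Q *v x) \<bullet> (Q *v x) = x \<bullet> x"
  proof -
    have "(Q *v x) \<bullet> (Q *v x) = (x v* transpose Q) \<bullet> (Q *v x)" by simp
    also have "\<dots> = x \<bullet> (transpose Q *v (Q *v x))" by (rule dot_lmul_matrix)
    also have "\<dots> = x \<bullet> x" using assms by (simp add: matrix_vector_mul_assoc orthogonal_matrix)
    finally show ?thesis .
  qed
  then show ?thesis by (simp add: norm_eq_sqrt_inner)
qed

lemma fro_orth:
  assumes Q: "orthogonal_matrix (Q::real^'n^'n)"
  shows "fro (Q ** M ** transpose Q) = fro M"
proof -
  have QQ: "transpose Q ** Q = mat 1" using Q by (simp add: orthogonal_matrix)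
  have "(Q ** M ** transpose Q) ** transpose (Q ** M ** transpose Q)
        = Q ** ((M ** transpose M) ** transpose Q)"
  proof -
    have "(Q ** M ** transpose Q) ** transpose (Q ** M ** transpose Q)
        = Q ** M ** (transpose Q ** Q) ** transpose M ** transpose Q"
      by (simp add: matrix_transpose_mul matrix_mul_assoc)
    also have "\<dots> = Q ** ((M ** transpose M) ** transpose Q)"
      by (simp add: QQ matrix_mul_assoc)
    finally show ?thesis .
  qed
  then have "fro (Q ** M ** transpose Q) = trace (Q ** ((M ** transpose M) ** transpose Q))"
    by (simp add: fro_trace)
  also have "\<dots> = trace (((M ** transpose M) ** transpose Q) ** Q)" by (rule trace_mul_sym)
  also have "\<dots> = trace (M ** transpose M)" by (simp add: QQ flip: matrix_mul_assoc)
  finally show ?thesis by (simp add: fro_trace)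
qed

lemma fro_diag:
  assumes "\<forall>i j. i \<noteq> j \<longrightarrow> (D::real^'n^'n)$i$j = 0"
  shows "fro D = (\<Sum>k\<in>UNIV. (D$k$k)^2)"
  unfolding fro_def
proof (rule sum.cong)
  fix k
  have "(\<Sum>j\<in>UNIV. (D$k$j)^2) = (\<Sum>j\<in>UNIV. if j = k then (D$k$k)^2 else 0)"
    by (rule sum.cong) (use assms in auto)
  then show "(norm (D$k))^2 = (D$k$k)^2" by (simp add: norm_sq_vec)
qed simp

lemma knapsack:
  fixes v w :: "'n::finite \<Rightarrow> real"
  assumes w01: "\<forall>k. 0 \<le> w k \<and> w k \<le> 1" and sw: "sum w UNIV \<le> real (card S)"
    and Sne: "S \<noteq> {}" and v0: "\<forall>k. 0 \<le> v k"
    and top: "\<forall>i\<in>S. \<forall>j. j \<notin> S \<longrightarrow> v j \<le> v i"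
  shows "(\<Sum>k\<in>UNIV. v k * w k) \<le> sum v S"
proof -
  have finS: "finite S" by simp
  define t where "t = Min (v ` S)"
  have tS: "t \<in> v ` S" unfolding t_def using Sne by simp
  then have t0: "0 \<le> t" using v0 by auto
  have tle: "t \<le> v i" if "i \<in> S" for i unfolding t_def using that by simp
  have let_: "v j \<le> t" if "j \<notin> S" for j using tS top that by auto
  have split: "(\<Sum>k\<in>UNIV. f k) = sum f S + (\<Sum>k\<in>UNIV - S. f k)" for f :: "'n \<Rightarrow> real"
    using sum.subset_diff[of S UNIV f] by simp
  have "(\<Sum>k\<in>UNIV - S. v k * w k) \<le> (\<Sum>k\<in>UNIV - S. t * w k)"
    by (rule sum_mono) (use let_ w01 in \<open>auto intro: mult_right_mono\<close>)
  also have "\<dots> = t * (\<Sum>k\<in>UNIV - S. w k)" by (simp add: sum_distrib_left)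
  also have "\<dots> \<le> t * (\<Sum>k\<in>S. 1 - w k)"
  proof (rule mult_left_mono[OF _ t0])
    have "(\<Sum>k\<in>UNIV - S. w k) = sum w UNIV - sum w S" using split[of w] by simp
    also have "\<dots> \<le> real (card S) - sum w S" using sw by simp
    also have "\<dots> = (\<Sum>k\<in>S. 1 - w k)" by (simp add: sum_subtractf)
    finally show "(\<Sum>k\<in>UNIV - S. w k) \<le> (\<Sum>k\<in>S. 1 - w k)" .
  qed
  also have "\<dots> = (\<Sum>k\<in>S. t * (1 - w k))" by (simp add: sum_distrib_left)
  also have "\<dots> \<le> (\<Sum>k\<in>S. v k * (1 - w k))"
    by (rule sum_mono) (use tle w01 in \<open>auto intro: mult_right_mono\<close>)
  finally have "(\<Sum>k\<in>UNIV - S. v k * w k) \<le> (\<Sum>k\<in>S. v k * (1 - w k))" .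
  then have "(\<Sum>k\<in>UNIV. v k * w k) \<le> (\<Sum>k\<in>S. v k * w k) + (\<Sum>k\<in>S. v k * (1 - w k))"
    using split[of "\<lambda>k. v k * w k"] by simp
  also have "\<dots> = sum v S" by (simp add: sum.distrib[symmetric] algebra_simps)
  finally show ?thesis .
qed

lemma sym_sum_split:
  fixes g :: "'n::{finite,linorder} \<Rightarrow> 'n \<Rightarrow> real"
  assumes sym: "\<forall>i j. g i j = g j i"
  shows "(\<Sum>i\<in>UNIV. \<Sum>j\<in>UNIV. g i j) = 2 * (\<Sum>(i,j)\<in>{(i,j). i<j}. g i j) + (\<Sum>i\<in>UNIV. g i i)"
proof -
  define P1 where "P1 = {(i::'n,j). i<j}"
  define P2 where "P2 = {(i::'n,j). j<i}"
  define P3 where "P3 = {(i::'n,j). i=j}"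
  have U: "(UNIV::('n\<times>'n) set) = P1 \<union> P2 \<union> P3"
    by (auto simp: P1_def P2_def P3_def)
  have "(\<Sum>i\<in>UNIV. \<Sum>j\<in>UNIV. g i j) = (\<Sum>p\<in>UNIV. case_prod g p)"
    by (simp add: sum.cartesian_product)
  also have "\<dots> = (\<Sum>p\<in>P1. case_prod g p) + (\<Sum>p\<in>P2. case_prod g p) + (\<Sum>p\<in>P3. case_prod g p)"
  proof -
    have d12: "P1 \<inter> P2 = {}" and d3: "(P1 \<union> P2) \<inter> P3 = {}" by (auto simp: P1_def P2_def P3_def)
    show ?thesis unfolding U by (simp add: sum.union_disjoint d12 d3)
  qed
  also have "(\<Sum>p\<in>P2. case_prod g p) = (\<Sum>p\<in>P1. case_prod g p)"
  proof -
    have "P2 = prod.swap ` P1" by (auto simp: P1_def P2_def image_iff)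
    then have "(\<Sum>p\<in>P2. case_prod g p) = (\<Sum>p\<in>P1. case_prod g (prod.swap p))"
      by (simp add: sum.reindex)
    also have "\<dots> = (\<Sum>p\<in>P1. case_prod g p)" using sym by (auto intro!: sum.cong)
    finally show ?thesis .
  qed
  also have "(\<Sum>p\<in>P3. case_prod g p) = (\<Sum>i\<in>UNIV. g i i)"
  proof -
    have "P3 = (\<lambda>i. (i,i)) ` UNIV" by (auto simp: P3_def)
    then show ?thesis by (simp add: sum.reindex inj_on_def)
  qed
  finally show ?thesis by (simp add: P1_def)
qed

lemma row_eq: "row i (X::real^'n^'m) = X$i"
  by (simp add: row_def vec_eq_iff)


lemma EY:
  fixes A X Q D :: "real^'n^'n"
  assumes Q: "orthogonal_matrix Q" and Dd: "\<forall>i j. i \<noteq> j \<longrightarrow> D$i$j = 0"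
    and A: "A = Q ** D ** transpose Q"
    and rk: "rank X \<le> card S" and top: "\<forall>i\<in>S. \<forall>j. j \<notin> S \<longrightarrow> \<bar>D$j$j\<bar> \<le> \<bar>D$i$i\<bar>"
    and Sne: "S \<noteq> {}"
  shows "(\<Sum>k\<in>UNIV - S. (D$k$k)^2) \<le> fro (A - X)"
proof -
  define V where "V = span (rows X)"
  have "subspace V" by (simp add: V_def)
  then obtain B where BV: "B \<subseteq> V" and orth: "pairwise orthogonal B"
    and unit: "\<And>x. x\<in>B \<Longrightarrow> norm x = 1" and ind: "independent B"
    and cB: "card B = dim V" and spB: "span B = V"
    using orthonormal_basis_subspace[OF \<open>subspace V\<close>] by blast
  have fin: "finite B" using ind by (rule independent_imp_finite)
  have cardB: "card B \<le> card S" using rk cB by (simp add: V_def row_rank_def dim_span)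
  have rowX: "X$i \<in> span B" for i
  proof -
    have "X$i \<in> rows X" by (simp add: rows_def row_eq) (rule exI[of _ i], rule refl)
    then show ?thesis using spB span_base[of "X$i" "rows X"] by (simp add: V_def)
  qed
  have step1: "fro A - (\<Sum>b\<in>B. (norm (A *v b))^2) \<le> fro (A - X)"
  proof -
    have "(\<Sum>i\<in>UNIV. (norm (A$i))^2 - (\<Sum>b\<in>B. (A$i \<bullet> b)^2)) \<le> (\<Sum>i\<in>UNIV. (norm (A$i - X$i))^2)"
      by (rule sum_mono, rule proj_bound[OF fin orth unit rowX])
    moreover have "(\<Sum>i\<in>UNIV. (\<Sum>b\<in>B. (A$i \<bullet> b)^2)) = (\<Sum>b\<in>B. (norm (A *v b))^2)"
      by (subst sum.swap) (simp add: norm_sq_vec matrix_vector_mul_component)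
    ultimately show ?thesis by (simp add: fro_def sum_subtractf)
  qed
  define q where "q k = transpose Q $ k" for k
  define w where "w k = (\<Sum>b\<in>B. (q k \<bullet> b)^2)" for k
  have Dv: "(D *v c)$k = D$k$k * c$k" for c k
  proof -
    have "(D *v c)$k = (\<Sum>j\<in>UNIV. if j = k then D$k$k * c$k else 0)"
      unfolding matrix_vector_mult_def vec_lambda_beta by (rule sum.cong) (use Dd in auto)
    then show ?thesis by simp
  qed
  have Qc: "(transpose Q *v b)$k = q k \<bullet> b" for b k
    by (simp add: q_def matrix_vector_mul_component del: transpose_matrix_vector)
  have step2: "(\<Sum>b\<in>B. (norm (A *v b))^2) = (\<Sum>k\<in>UNIV. (D$k$k)^2 * w k)"
  proof -
    have "norm (A *v b) = norm (D *v (transpose Q *v b))" for b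
      using orth_norm[OF Q] by (simp add: A matrix_vector_mul_assoc[symmetric] del: transpose_matrix_vector)
    then have "(\<Sum>b\<in>B. (norm (A *v b))^2) = (\<Sum>b\<in>B. \<Sum>k\<in>UNIV. (D$k$k)^2 * (q k \<bullet> b)^2)"
      by (simp add: norm_sq_vec Dv Qc power_mult_distrib del: transpose_matrix_vector)
    also have "\<dots> = (\<Sum>k\<in>UNIV. (D$k$k)^2 * w k)"
      by (subst sum.swap) (simp add: w_def sum_distrib_left)
    finally show ?thesis .
  qed
  have qn: "norm (q k) = 1" for k
  proof -
    have "q k = Q *v axis k 1"
      by (simp add: matrix_vector_mult_basis q_def column_def transpose_def vec_eq_iff)
    then show ?thesis using orth_norm[OF Q] by (simp add: norm_axis_1)
  qed
  have w01: "\<forall>k. 0 \<le> w k \<and> w k \<le> 1"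
    using bessel[OF fin orth unit, of "q _"] qn by (auto simp: w_def sum_nonneg)
  have sw: "sum w UNIV \<le> real (card S)"
  proof -
    have "sum w UNIV = (\<Sum>b\<in>B. \<Sum>k\<in>UNIV. (q k \<bullet> b)^2)"
      unfolding w_def by (rule sum.swap)
    also have "\<dots> = (\<Sum>b\<in>B. (norm (transpose Q *v b))^2)"
      by (simp add: norm_sq_vec Qc del: transpose_matrix_vector)
    also have "\<dots> = (\<Sum>b\<in>B. 1)"
      using orth_norm[of "transpose Q"] Q unit by (simp del: transpose_matrix_vector)
    also have "\<dots> = real (card B)" by simp
    finally show ?thesis using cardB by simp
  qed
  have kn: "(\<Sum>k\<in>UNIV. (D$k$k)^2 * w k) \<le> (\<Sum>k\<in>S. (D$k$k)^2)"
    by (rule knapsack[OF w01 sw Sne]) (use top in \<open>auto simp: abs_le_square_iff\<close>)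
  have fA: "fro A = (\<Sum>k\<in>UNIV. (D$k$k)^2)"
    using fro_orth[OF Q] fro_diag[OF Dd] by (simp add: A)
  have "(\<Sum>k\<in>UNIV - S. (D$k$k)^2) = (\<Sum>k\<in>UNIV. (D$k$k)^2) - (\<Sum>k\<in>S. (D$k$k)^2)"
    by (simp add: sum_diff)
  then show ?thesis using step1 step2 kn fA by linarith
qed


lemma mat_sub_ldistrib: "(A::real^'n^'m) ** B - A ** C = A ** (B - C)"
  by (simp add: matrix_matrix_mult_def vec_eq_iff sum_subtractf right_diff_distrib)

lemma mat_sub_rdistrib: "(B::real^'n^'m) ** A - C ** A = (B - C) ** A"
  by (simp add: matrix_matrix_mult_def vec_eq_iff sum_subtractf left_diff_distrib)

lemma obj_fro:
  fixes C X Lam :: "real^('n::{finite,linorder})^('n::{finite,linorder})"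
  assumes CT: "transpose C = C" and Cd: "\<forall>i. C $ i $ i = 1"
    and XT: "transpose X = X" and Xd: "\<forall>i. X $ i $ i = 1"
    and Ld: "\<forall>i j. i \<noteq> j \<longrightarrow> Lam$i$j = 0"
  shows "fro (C + Lam - X) = 4 * objective C X + (\<Sum>i\<in>UNIV. (Lam$i$i)^2)"
proof -
  define g where "g i j = ((C + Lam - X)$i$j)^2" for i j
  have Cs: "C$i$j = C$j$i" for i j using arg_cong[OF CT, of "\<lambda>M. M$i$j"] by (simp add: transpose_def)
  have Xs: "X$i$j = X$j$i" for i j using arg_cong[OF XT, of "\<lambda>M. M$i$j"] by (simp add: transpose_def)
  have Ls: "Lam$i$j = Lam$j$i" for i j using Ld by (cases "i = j") auto
  have sym: "\<forall>i j. g i j = g j i" by (simp add: g_def Cs Xs Ls)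
  have "fro (C + Lam - X) = (\<Sum>i\<in>UNIV. \<Sum>j\<in>UNIV. g i j)" by (simp add: fro_def norm_sq_vec g_def)
  also have "\<dots> = 2 * (\<Sum>(i,j)\<in>{(i,j). i<j}. g i j) + (\<Sum>i\<in>UNIV. g i i)" by (rule sym_sum_split[OF sym])
  also have "(\<Sum>(i,j)\<in>{(i,j). i<j}. g i j) = (\<Sum>(i,j)\<in>{(i,j). i<j}. (C$i$j - X$i$j)^2)"
    by (rule sum.cong) (auto simp: g_def Ld)
  also have "(\<Sum>i\<in>UNIV. g i i) = (\<Sum>i\<in>UNIV. (Lam$i$i)^2)" by (simp add: g_def Cd Xd)
  finally show ?thesis by (simp add: objective_def)
qed

theorem theorem6p3:
  fixes C :: "real^('n::{finite,linorder})^('n::{finite,linorder})"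
    and Y :: "real^('d::finite)^('n::{finite,linorder})"
  assumes d_gt: "1 < CARD('d)" and d_le: "CARD('d) \<le> CARD('n)"
    and C_sym: "transpose C = C" and C_diag: "\<forall>i. C $ i $ i = 1"
    and Y_T: "in_T Y"
    and stat: "let F = 2 *\<^sub>R ((Y ** transpose Y - C) ** Y)
               in F - diag_part (F ** transpose Y) ** Y = 0"
    and top_d: "let F = 2 *\<^sub>R ((Y ** transpose Y - C) ** Y);
                    Lam = (1/2) *\<^sub>R diag_part (F ** transpose Y);
                    Clam = C + Lam
                in \<exists>Q D S. orthogonal_matrix Q \<and> (\<forall>i j. i \<noteq> j \<longrightarrow> D $ i $ j = 0)
                     \<and> Clam = Q ** D ** transpose Q
                     \<and> card S = CARD('d)
                     \<and> (\<forall>i\<in>S. \<forall>j. j \<notin> S \<longrightarrow> \<bar>D $ j $ j\<bar> \<le> \<bar>D $ i $ i\<bar>)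
                     \<and> Y ** transpose Y
                         = Q ** (\<chi> i j. if i = j \<and> i \<in> S then D $ i $ j else 0) ** transpose Q"
  shows "feasible (CARD('d)) (Y ** transpose Y)
         \<and> (\<forall>X. feasible (CARD('d)) X \<longrightarrow> objective C (Y ** transpose Y) \<le> objective C X)"
proof -
  define F where "F = 2 *\<^sub>R ((Y ** transpose Y - C) ** Y)"
  define Lam where "Lam = (1/2) *\<^sub>R diag_part (F ** transpose Y)"
  define Clam where "Clam = C + Lam"
  have "\<exists>Q D S. orthogonal_matrix Q \<and> (\<forall>i j. i \<noteq> j \<longrightarrow> D $ i $ j = 0)
                     \<and> Clam = Q ** D ** transpose Q
                     \<and> card S = CARD('d)
                     \<and> (\<forall>i\<in>S. \<forall>j. j \<notin> S \<longrightarrow> \<bar>D $ j $ j\<bar> \<le> \<bar>D $ i $ i\<bar>)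
                     \<and> Y ** transpose Y
                         = Q ** (\<chi> i j. if i = j \<and> i \<in> S then D $ i $ j else 0) ** transpose Q"
    using top_d unfolding Let_def Clam_def Lam_def F_def by assumption
  then obtain Q D S where Q: "orthogonal_matrix Q" and Dd: "\<forall>i j. i \<noteq> j \<longrightarrow> D $ i $ j = 0"
    and CQ: "Clam = Q ** D ** transpose Q" and cS: "card S = CARD('d)"
    and topS: "\<forall>i\<in>S. \<forall>j. j \<notin> S \<longrightarrow> \<bar>D $ j $ j\<bar> \<le> \<bar>D $ i $ i\<bar>"
    and YY: "Y ** transpose Y = Q ** (\<chi> i j. if i = j \<and> i \<in> S then D $ i $ j else 0) ** transpose Q"
    by blast
  have Ld: "\<forall>i j. i \<noteq> j \<longrightarrow> Lam$i$j = 0" by (simp add: Lam_def diag_part_def)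
  have Sne: "S \<noteq> {}" using cS d_gt by auto
  have YT: "transpose (Y ** transpose Y) = Y ** transpose Y" by (simp add: matrix_transpose_mul)
  have rkY: "rank (Y ** transpose Y) \<le> CARD('d)"
    using rank_mul_le_left[of Y "transpose Y"] rank_bound[of Y] by simp
  have dY: "(Y ** transpose Y)$i$i = 1" for i
  proof -
    have "(Y ** transpose Y)$i$i = (norm (Y$i))^2"
      unfolding norm_sq_vec by (simp add: matrix_matrix_mult_def transpose_def power2_eq_square)
    then show ?thesis using Y_T by (simp add: in_T_def)
  qed
  have pY: "psd (Y ** transpose Y)"
    unfolding psd_def
  proof
    fix x
    have "x \<bullet> ((Y ** transpose Y) *v x) = x \<bullet> (Y *v (transpose Y *v x))"
      by (simp only: matrix_vector_mul_assoc)
    also have "\<dots> = (x v* Y) \<bullet> (transpose Y *v x)" by (simp only: dot_lmul_matrix)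
    also have "\<dots> = (x v* Y) \<bullet> (x v* Y)" by simp
    finally show "0 \<le> x \<bullet> ((Y ** transpose Y) *v x)" by simp
  qed
  have feasY: "feasible (CARD('d)) (Y ** transpose Y)"
    using YT rkY dY pY by (simp add: feasible_def)
  have E1: "fro (Clam - Y ** transpose Y) = (\<Sum>k\<in>UNIV - S. (D$k$k)^2)"
  proof -
    define DS where "DS = (\<chi> i j. if i = j \<and> i \<in> S then D $ i $ j else 0)"
    have "Clam - Y ** transpose Y = Q ** D ** transpose Q - Q ** DS ** transpose Q"
      by (simp only: CQ YY DS_def)
    also have "\<dots> = Q ** (D - DS) ** transpose Q"
      by (simp only: mat_sub_ldistrib mat_sub_rdistrib)
    finally have "Clam - Y ** transpose Y = Q ** (D - DS) ** transpose Q" .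
    then have "fro (Clam - Y ** transpose Y) = fro (D - DS)" by (simp add: fro_orth[OF Q])
    also have "\<dots> = (\<Sum>k\<in>UNIV. ((D - DS)$k$k)^2)"
      by (rule fro_diag) (simp add: DS_def Dd)
    also have "\<dots> = (\<Sum>k\<in>UNIV. if k \<in> S then 0 else (D$k$k)^2)"
      by (rule sum.cong) (auto simp: DS_def)
    also have "\<dots> = (\<Sum>k\<in>UNIV - S. (D$k$k)^2)"
      by (simp add: sum.If_cases Diff_eq)
    finally show ?thesis .
  qed
  have main: "objective C (Y ** transpose Y) \<le> objective C X" if fX: "feasible (CARD('d)) X" for X
  proof -
    have XT: "transpose X = X" and rX: "rank X \<le> card S" and Xd: "\<forall>i. X$i$i = 1"
      using fX cS by (auto simp: feasible_def)
    have "(\<Sum>k\<in>UNIV - S. (D$k$k)^2) \<le> fro (Clam - X)"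
      by (rule EY[OF Q Dd CQ rX topS Sne])
    moreover have "fro (Clam - X) = 4 * objective C X + (\<Sum>i\<in>UNIV. (Lam$i$i)^2)"
      unfolding Clam_def by (rule obj_fro[OF C_sym C_diag XT Xd Ld])
    moreover have "fro (Clam - Y ** transpose Y) = 4 * objective C (Y ** transpose Y) + (\<Sum>i\<in>UNIV. (Lam$i$i)^2)"
      unfolding Clam_def by (rule obj_fro[OF C_sym C_diag YT _ Ld]) (simp add: dY)
    ultimately show ?thesis using E1 by linarith
  qed
  show ?thesis by (intro conjI allI impI feasY main)
qed

end
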